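(* Let $\Gamma$ be a group and $S$ a $\Gamma$-graded inverse semigroup. The following are equivalent: (1) $S$ is locally strongly graded; (2) for all $\alpha\in\Gamma$ and $u\in E(S)\setminus\{0\}$ there is $v\in E(S)_\alpha\setminus\{0\}$ with $v\le u$; (3) for all $\alpha,\beta\in\Gamma$ and $s\in S_{\alpha\beta}\setminus\{0\}$ there is $u\in E(S)\setminus\{0\}$ with $u\le s^{-1}s$ and $su\in S_\alpha S_\beta$; (4) for all $\alpha,\beta\in\Gamma$ and $s\in S_{\alpha\beta}\setminus\{0\}$ there is $u\in E(S)\setminus\{0\}$ with $u\le ss^{-1}$ and $us\in S_\alpha S_\beta$.
   Context: Semigroups have a zero; $S$ is $\Gamma$-graded via $\deg:S\setminus\{0\}\to\Gamma$ with $\deg(st)=\deg(s)\deg(t)$ whenever $st\neq0$; $S_\alpha=\deg^{-1}(\alpha)\cup\{0\}$. $E(S)$ is the set of idempotents, $E(S)_\alpha=\{ss^{-1}:s\in S_\alpha\}$. Natural partial order: $s\le t$ iff $s=tu$ for some $u\in E(S)$. $S$ is locally strongly graded if for all $\alpha,\beta\in\Gamma$ and $s\in S_{\alpha\beta}\setminus\{0\}$ there exists $t\in S_\alpha S_\beta\setminus\{0\}$ with $t\le s$. *)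

theory Defs
  imports "HOL-Algebra.Group"
begin

definition semigroup_zero :: "'a set \<Rightarrow> ('a \<Rightarrow> 'a \<Rightarrow> 'a) \<Rightarrow> 'a \<Rightarrow> bool" where
  "semigroup_zero S smul z \<longleftrightarrow>
     z \<in> S \<and>
     (\<forall>x\<in>S. \<forall>y\<in>S. smul x y \<in> S) \<and>
     (\<forall>x\<in>S. \<forall>y\<in>S. \<forall>w\<in>S. smul (smul x y) w = smul x (smul y w)) \<and>
     (\<forall>x\<in>S. smul z x = z \<and> smul x z = z)"

definition inverse_semigroup_zero :: "'a set \<Rightarrow> ('a \<Rightarrow> 'a \<Rightarrow> 'a) \<Rightarrow> 'a \<Rightarrow> bool" where
  "inverse_semigroup_zero S smul z \<longleftrightarrow>
     semigroup_zero S smul z \<and>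
     (\<forall>s\<in>S. \<exists>!t. t \<in> S \<and> smul (smul s t) s = s \<and> smul (smul t s) t = t)"

definition sinv :: "'a set \<Rightarrow> ('a \<Rightarrow> 'a \<Rightarrow> 'a) \<Rightarrow> 'a \<Rightarrow> 'a" where
  "sinv S smul s = (THE t. t \<in> S \<and> smul (smul s t) s = s \<and> smul (smul t s) t = t)"

definition idems :: "'a set \<Rightarrow> ('a \<Rightarrow> 'a \<Rightarrow> 'a) \<Rightarrow> 'a set" where
  "idems S smul = {e \<in> S. smul e e = e}"

definition npo :: "'a set \<Rightarrow> ('a \<Rightarrow> 'a \<Rightarrow> 'a) \<Rightarrow> 'a \<Rightarrow> 'a \<Rightarrow> bool" where
  "npo S smul s t \<longleftrightarrow> (\<exists>u \<in> idems S smul. s = smul t u)"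

definition graded :: "('g, 'b) monoid_scheme \<Rightarrow> 'a set \<Rightarrow> ('a \<Rightarrow> 'a \<Rightarrow> 'a) \<Rightarrow> 'a \<Rightarrow> ('a \<Rightarrow> 'g) \<Rightarrow> bool" where
  "graded G S smul z deg \<longleftrightarrow>
     (\<forall>s \<in> S - {z}. deg s \<in> carrier G) \<and>
     (\<forall>s \<in> S - {z}. \<forall>t \<in> S - {z}. smul s t \<noteq> z \<longrightarrow> deg (smul s t) = deg s \<otimes>\<^bsub>G\<^esub> deg t)"

definition hcomp :: "'a set \<Rightarrow> 'a \<Rightarrow> ('a \<Rightarrow> 'g) \<Rightarrow> 'g \<Rightarrow> 'a set" where
  "hcomp S z deg \<alpha> = {s \<in> S - {z}. deg s = \<alpha>} \<union> {z}"

definition setmult :: "('a \<Rightarrow> 'a \<Rightarrow> 'a) \<Rightarrow> 'a set \<Rightarrow> 'a set \<Rightarrow> 'a set" where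
  "setmult smul A B = {smul a b | a b. a \<in> A \<and> b \<in> B}"

definition idems_deg :: "'a set \<Rightarrow> ('a \<Rightarrow> 'a \<Rightarrow> 'a) \<Rightarrow> 'a \<Rightarrow> ('a \<Rightarrow> 'g) \<Rightarrow> 'g \<Rightarrow> 'a set" where
  "idems_deg S smul z deg \<alpha> = {smul s (sinv S smul s) | s. s \<in> hcomp S z deg \<alpha>}"

definition locally_strongly_graded ::
  "('g, 'b) monoid_scheme \<Rightarrow> 'a set \<Rightarrow> ('a \<Rightarrow> 'a \<Rightarrow> 'a) \<Rightarrow> 'a \<Rightarrow> ('a \<Rightarrow> 'g) \<Rightarrow> bool" where
  "locally_strongly_graded G S smul z deg \<longleftrightarrow>
     (\<forall>\<alpha> \<in> carrier G. \<forall>\<beta> \<in> carrier G.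
        \<forall>s \<in> hcomp S z deg (\<alpha> \<otimes>\<^bsub>G\<^esub> \<beta>) - {z}.
          \<exists>t \<in> setmult smul (hcomp S z deg \<alpha>) (hcomp S z deg \<beta>) - {z}. npo S smul t s)"

end

theory Submission
  imports Defs
begin

locale isz =
  fixes S :: "'a set" and smul :: "'a \<Rightarrow> 'a \<Rightarrow> 'a" (infixl "\<cdot>" 70) and z :: 'a
  assumes isz: "inverse_semigroup_zero S smul z"
begin

lemma zS: "z \<in> S" and cl: "x \<in> S \<Longrightarrow> y \<in> S \<Longrightarrow> x \<cdot> y \<in> S"
  and as: "x \<in> S \<Longrightarrow> y \<in> S \<Longrightarrow> w \<in> S \<Longrightarrow> x \<cdot> y \<cdot> w = x \<cdot> (y \<cdot> w)"
  and zl: "x \<in> S \<Longrightarrow> z \<cdot> x = z" and zr: "x \<in> S \<Longrightarrow> x \<cdot> z = z"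
  using isz unfolding inverse_semigroup_zero_def semigroup_zero_def by auto

lemma uniq: "s \<in> S \<Longrightarrow> \<exists>!t. t \<in> S \<and> s \<cdot> t \<cdot> s = s \<and> t \<cdot> s \<cdot> t = t"
  using isz unfolding inverse_semigroup_zero_def by auto

lemma inv: assumes "s \<in> S"
  shows "sinv S smul s \<in> S" "s \<cdot> sinv S smul s \<cdot> s = s" "sinv S smul s \<cdot> s \<cdot> sinv S smul s = sinv S smul s"
  using theI'[OF uniq[OF assms]] unfolding sinv_def by auto

lemma inv_eq: assumes "s \<in> S" "t \<in> S" "s \<cdot> t \<cdot> s = s" "t \<cdot> s \<cdot> t = t"
  shows "t = sinv S smul s"
  using uniq[OF assms(1)] inv[OF assms(1)] assms by blast

lemma idem_prod: assumes e: "e \<in> S" "e \<cdot> e = e" and f: "f \<in> S" "f \<cdot> f = f"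
  shows "e \<cdot> f \<cdot> (e \<cdot> f) = e \<cdot> f"
proof -
  have ee: "\<And>x. x \<in> S \<Longrightarrow> e \<cdot> (e \<cdot> x) = e \<cdot> x" using e as by metis
  have ff: "\<And>x. x \<in> S \<Longrightarrow> f \<cdot> (f \<cdot> x) = f \<cdot> x" using f as by metis
  define a where "a = sinv S smul (e \<cdot> f)"
  have efS: "e \<cdot> f \<in> S" using e f cl by auto
  have aS: "a \<in> S" and a1: "e \<cdot> f \<cdot> a \<cdot> (e \<cdot> f) = e \<cdot> f" and a2: "a \<cdot> (e \<cdot> f) \<cdot> a = a"
    using inv[OF efS] unfolding a_def by auto
  have faeS: "f \<cdot> a \<cdot> e \<in> S" using cl aS e f by auto
  have "e \<cdot> f \<cdot> (f \<cdot> a \<cdot> e) \<cdot> (e \<cdot> f) = e \<cdot> (f \<cdot> f) \<cdot> a \<cdot> (e \<cdot> e) \<cdot> f"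
    using e f aS by (simp add: as cl ee ff)
  also have "\<dots> = e \<cdot> f \<cdot> a \<cdot> e \<cdot> f" using e f by simp
  also have "\<dots> = e \<cdot> f \<cdot> a \<cdot> (e \<cdot> f)" using e f aS cl as by simp
  also have "\<dots> = e \<cdot> f" using a1 .
  finally have b1: "e \<cdot> f \<cdot> (f \<cdot> a \<cdot> e) \<cdot> (e \<cdot> f) = e \<cdot> f" .
  have "f \<cdot> a \<cdot> e \<cdot> (e \<cdot> f) \<cdot> (f \<cdot> a \<cdot> e) = f \<cdot> (a \<cdot> (e \<cdot> e) \<cdot> (f \<cdot> f) \<cdot> a) \<cdot> e"
    using e f aS by (simp add: as cl ee ff)
  also have "\<dots> = f \<cdot> a \<cdot> e" using a2 e f aS by (simp add: as cl ee ff)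
  finally have b2: "f \<cdot> a \<cdot> e \<cdot> (e \<cdot> f) \<cdot> (f \<cdot> a \<cdot> e) = f \<cdot> a \<cdot> e" .
  have aeq: "f \<cdot> a \<cdot> e = a" using inv_eq[OF efS faeS b1 b2] a_def by simp
  have "a \<cdot> a = f \<cdot> a \<cdot> e \<cdot> (f \<cdot> a \<cdot> e)" using aeq by simp
  also have "\<dots> = f \<cdot> (a \<cdot> (e \<cdot> f) \<cdot> a) \<cdot> e" using e f aS by (simp add: as cl ee ff)
  also have "\<dots> = a" using a2 aeq by simp
  finally have aa: "a \<cdot> a = a" .
  have "a = sinv S smul a" using inv_eq[OF aS aS] aa by simp
  moreover have "e \<cdot> f = sinv S smul a" using inv_eq[OF aS efS] a1 a2 by simp
  ultimately have efa: "e \<cdot> f = a" by simp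
  hence efid: "e \<cdot> f \<cdot> (e \<cdot> f) = e \<cdot> f" using aa by simp
  thus ?thesis .
qed

lemma idem_comm: assumes e: "e \<in> S" "e \<cdot> e = e" and f: "f \<in> S" "f \<cdot> f = f"
  shows "e \<cdot> f = f \<cdot> e"
proof -
  have efid: "e \<cdot> f \<cdot> (e \<cdot> f) = e \<cdot> f" using idem_prod e f by blast
  have feid: "f \<cdot> e \<cdot> (f \<cdot> e) = f \<cdot> e" using idem_prod e f by blast
  have ee: "\<And>x. x \<in> S \<Longrightarrow> e \<cdot> (e \<cdot> x) = e \<cdot> x" using e as by metis
  have ff: "\<And>x. x \<in> S \<Longrightarrow> f \<cdot> (f \<cdot> x) = f \<cdot> x" using f as by metis
  have efS: "e \<cdot> f \<in> S" using e f cl by auto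
  have feS: "f \<cdot> e \<in> S" using e f cl by auto
  have "e \<cdot> f \<cdot> (f \<cdot> e) \<cdot> (e \<cdot> f) = e \<cdot> (f \<cdot> f) \<cdot> (e \<cdot> e) \<cdot> f" using e f by (simp add: as cl ee ff)
  also have "\<dots> = e \<cdot> f \<cdot> (e \<cdot> f)" using e f by (simp add: as cl ee ff)
  finally have c1: "e \<cdot> f \<cdot> (f \<cdot> e) \<cdot> (e \<cdot> f) = e \<cdot> f" using efid by simp
  have "f \<cdot> e \<cdot> (e \<cdot> f) \<cdot> (f \<cdot> e) = f \<cdot> (e \<cdot> e) \<cdot> (f \<cdot> f) \<cdot> e" using e f by (simp add: as cl ee ff)
  also have "\<dots> = f \<cdot> e \<cdot> (f \<cdot> e)" using e f by (simp add: as cl ee ff)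
  finally have c2: "f \<cdot> e \<cdot> (e \<cdot> f) \<cdot> (f \<cdot> e) = f \<cdot> e" using feid by simp
  have "f \<cdot> e = sinv S smul (e \<cdot> f)" using inv_eq[OF efS feS c1 c2] .
  moreover have "e \<cdot> f = sinv S smul (e \<cdot> f)" using inv_eq[OF efS efS] efid by simp
  ultimately show ?thesis by simp
qed


abbreviation iv ("_\<^sup>*" [1000] 999) where "iv s \<equiv> sinv S smul s"

lemma invS[simp]: "s \<in> S \<Longrightarrow> s\<^sup>* \<in> S" using inv by blast

lemma ra1[simp]: "s \<in> S \<Longrightarrow> s \<cdot> (s\<^sup>* \<cdot> s) = s" using inv as by (metis invS)
lemma ra2[simp]: "s \<in> S \<Longrightarrow> s\<^sup>* \<cdot> (s \<cdot> s\<^sup>*) = s\<^sup>*" using inv as by (metis invS)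
lemma ra3[simp]: "s \<in> S \<Longrightarrow> x \<in> S \<Longrightarrow> s \<cdot> (s\<^sup>* \<cdot> (s \<cdot> x)) = s \<cdot> x"
proof -
  assume a: "s \<in> S" "x \<in> S"
  have "s \<cdot> (s\<^sup>* \<cdot> (s \<cdot> x)) = s \<cdot> (s\<^sup>* \<cdot> s) \<cdot> x" using a by (simp only: as cl invS)
  thus ?thesis using a by simp
qed
lemma ra4[simp]: "s \<in> S \<Longrightarrow> x \<in> S \<Longrightarrow> s\<^sup>* \<cdot> (s \<cdot> (s\<^sup>* \<cdot> x)) = s\<^sup>* \<cdot> x"
proof -
  assume a: "s \<in> S" "x \<in> S"
  have "s\<^sup>* \<cdot> (s \<cdot> (s\<^sup>* \<cdot> x)) = s\<^sup>* \<cdot> (s \<cdot> s\<^sup>*) \<cdot> x" using a by (simp only: as cl invS)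
  thus ?thesis using a by simp
qed

lemma idemI: "e \<in> idems S smul \<longleftrightarrow> e \<in> S \<and> e \<cdot> e = e" unfolding idems_def by auto

lemma ee_assoc: "e \<in> S \<Longrightarrow> e \<cdot> e = e \<Longrightarrow> x \<in> S \<Longrightarrow> e \<cdot> (e \<cdot> x) = e \<cdot> x"
  using as by metis

lemma ss_idem: "s \<in> S \<Longrightarrow> s \<cdot> s\<^sup>* \<in> idems S smul"
  unfolding idemI using inv cl as by (metis invS)
lemma ss_idem2: "s \<in> S \<Longrightarrow> s\<^sup>* \<cdot> s \<in> idems S smul"
  unfolding idemI using inv cl as by (metis invS)

lemma nz1: "s \<in> S \<Longrightarrow> s \<noteq> z \<Longrightarrow> s \<cdot> s\<^sup>* \<noteq> z"
  using inv zl by metis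
lemma nz2: "s \<in> S \<Longrightarrow> s \<noteq> z \<Longrightarrow> s\<^sup>* \<cdot> s \<noteq> z"
  using inv zr cl as by (metis invS)
lemma nz3: "s \<in> S \<Longrightarrow> s \<noteq> z \<Longrightarrow> s\<^sup>* \<noteq> z"
  using nz1 zr by metis

lemma idems_prod: "e \<in> idems S smul \<Longrightarrow> f \<in> idems S smul \<Longrightarrow> e \<cdot> f \<in> idems S smul"
  unfolding idemI using idem_prod cl by blast

end

locale gisz = isz S smul z for G :: "('g, 'b) monoid_scheme" and S :: "'a set" and smul (infixl "\<cdot>" 70) and z
  and deg :: "'a \<Rightarrow> 'g" +
  assumes grp: "group G" and gr: "graded G S smul z deg"
begin

lemma degC: "s \<in> S \<Longrightarrow> s \<noteq> z \<Longrightarrow> deg s \<in> carrier G" using gr unfolding graded_def by auto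

lemma degM: "s \<in> S \<Longrightarrow> t \<in> S \<Longrightarrow> s \<cdot> t \<noteq> z \<Longrightarrow> deg (s \<cdot> t) = deg s \<otimes>\<^bsub>G\<^esub> deg t"
  using gr zl zr unfolding graded_def by (metis Diff_iff singletonD)

lemma deg_idem: "e \<in> idems S smul \<Longrightarrow> e \<noteq> z \<Longrightarrow> deg e = \<one>\<^bsub>G\<^esub>"
proof -
  assume a: "e \<in> idems S smul" "e \<noteq> z"
  hence e: "e \<in> S" "e \<cdot> e = e" by (auto simp: idemI)
  hence "deg e = deg e \<otimes>\<^bsub>G\<^esub> deg e" using degM a by metis
  thus ?thesis using degC e a grp by (metis group.l_cancel_one' group.is_monoid monoid.r_one)
qed

lemma deg_inv: "s \<in> S \<Longrightarrow> s \<noteq> z \<Longrightarrow> deg (s\<^sup>*) = inv\<^bsub>G\<^esub> deg s"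
proof -
  assume a: "s \<in> S" "s \<noteq> z"
  have c: "deg s \<in> carrier G" "deg (s\<^sup>*) \<in> carrier G" using degC a nz3 by auto
  have "deg s = deg (s \<cdot> s\<^sup>*) \<otimes>\<^bsub>G\<^esub> deg s" using degM[of "s \<cdot> s\<^sup>*" s] a inv cl by (metis invS)
  also have "\<dots> = deg s \<otimes>\<^bsub>G\<^esub> deg (s\<^sup>*) \<otimes>\<^bsub>G\<^esub> deg s" using degM a nz1 by (metis invS)
  finally have "deg s \<otimes>\<^bsub>G\<^esub> deg (s\<^sup>*) = \<one>\<^bsub>G\<^esub>" using c grp
    by (metis group.is_monoid group.r_cancel_one' monoid.m_closed)
  thus ?thesis using c grp by (metis group.inv_equality group.l_inv group.inv_closed group.is_monoid monoid.m_assoc monoid.r_one monoid.l_one)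
qed

lemma hcI: "x \<in> S \<Longrightarrow> (x \<noteq> z \<Longrightarrow> deg x = \<alpha>) \<Longrightarrow> x \<in> hcomp S z deg \<alpha>"
  unfolding hcomp_def by auto
lemma hcD: "x \<in> hcomp S z deg \<alpha> \<Longrightarrow> x \<in> S \<and> (x \<noteq> z \<longrightarrow> deg x = \<alpha>)"
  unfolding hcomp_def using zS by auto


lemma hc_nz: "x \<in> hcomp S z deg \<alpha> \<Longrightarrow> x \<in> S" using hcD by blast

lemma L12:
  assumes L: "locally_strongly_graded G S smul z deg"
  shows "\<forall>\<alpha> \<in> carrier G. \<forall>u \<in> idems S smul - {z}.
             \<exists>v \<in> idems_deg S smul z deg \<alpha> - {z}. npo S smul v u"
proof (intro ballI)
  fix \<alpha> u assume \<alpha>: "\<alpha> \<in> carrier G" and u: "u \<in> idems S smul - {z}"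
  have uS: "u \<in> S" "u \<cdot> u = u" "u \<noteq> z" using u idemI by auto
  have "deg u = \<alpha> \<otimes>\<^bsub>G\<^esub> inv\<^bsub>G\<^esub> \<alpha>" using deg_idem u \<alpha> grp by (simp add: group.r_inv)
  hence "u \<in> hcomp S z deg (\<alpha> \<otimes>\<^bsub>G\<^esub> inv\<^bsub>G\<^esub> \<alpha>) - {z}" using hcI uS by auto
  then obtain t where t: "t \<in> setmult smul (hcomp S z deg \<alpha>) (hcomp S z deg (inv\<^bsub>G\<^esub> \<alpha>)) - {z}"
    and tu: "npo S smul t u"
    using L \<alpha> grp unfolding locally_strongly_graded_def by (meson group.inv_closed)
  obtain a b where ab: "t = a \<cdot> b" "a \<in> hcomp S z deg \<alpha>" "b \<in> hcomp S z deg (inv\<^bsub>G\<^esub> \<alpha>)"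
    using t unfolding setmult_def by auto
  have aS: "a \<in> S" "b \<in> S" using ab hcD by auto
  have tz: "t \<noteq> z" using t by auto
  have az: "a \<noteq> z" using ab tz zl aS by auto
  have dega: "deg a = \<alpha>" using ab hcD az by auto
  obtain e0 where e0: "e0 \<in> idems S smul" "t = u \<cdot> e0" using tu unfolding npo_def by auto
  have tI: "t \<in> idems S smul" using idems_prod e0 u by auto
  hence tS: "t \<in> S" "t \<cdot> t = t" using idemI by auto
  define c where "c = t \<cdot> a"
  have cS: "c \<in> S" using c_def cl tS aS by auto
  have "c \<cdot> b = t \<cdot> (a \<cdot> b)" unfolding c_def using aS tS by (simp add: as)
  hence "c \<cdot> b = t \<cdot> t" using ab(1) by simp
  hence cz: "c \<noteq> z" using tS tz zl aS by auto
  have degc: "deg c = \<alpha>" unfolding c_def using degM[of t a] cz c_def tS aS deg_idem[OF tI tz] dega \<alpha> grp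
    by (simp add: group.is_monoid monoid.l_one)
  define v where "v = c \<cdot> c\<^sup>*"
  have vI: "v \<in> idems S smul" using ss_idem cS v_def by auto
  have vz: "v \<noteq> z" using nz1 cS cz v_def by auto
  have vdeg: "v \<in> idems_deg S smul z deg \<alpha>" unfolding idems_deg_def v_def using hcI[OF cS] degc by auto
  have ut: "u \<cdot> t = t" using e0 uS ee_assoc idemI by auto
  have tc: "t \<cdot> c = c" unfolding c_def using ee_assoc tS aS by auto
  have tv: "t \<cdot> v = v" unfolding v_def using tc tS cS as by (metis invS)
  have "u \<cdot> v = v" using ut tv uS tS vI idemI as by metis
  hence "npo S smul v u" unfolding npo_def using vI by metis
  thus "\<exists>v \<in> idems_deg S smul z deg \<alpha> - {z}. npo S smul v u" using vdeg vz by auto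
qed


lemma idems_deg_D: "v \<in> idems_deg S smul z deg \<alpha> \<Longrightarrow> v \<noteq> z \<Longrightarrow>
   \<exists>w. w \<in> S \<and> w \<noteq> z \<and> deg w = \<alpha> \<and> v = w \<cdot> w\<^sup>*"
proof -
  assume a: "v \<in> idems_deg S smul z deg \<alpha>" "v \<noteq> z"
  then obtain w where w: "w \<in> hcomp S z deg \<alpha>" "v = w \<cdot> w\<^sup>*" unfolding idems_deg_def by auto
  have wS: "w \<in> S" using w hcD by auto
  have "w \<noteq> z" using a w zl inv zS by metis
  thus ?thesis using w wS hcD by auto
qed

lemma L23:
  assumes P: "\<forall>\<alpha> \<in> carrier G. \<forall>u \<in> idems S smul - {z}.
             \<exists>v \<in> idems_deg S smul z deg \<alpha> - {z}. npo S smul v u"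
  shows "\<forall>\<alpha> \<in> carrier G. \<forall>\<beta> \<in> carrier G.
             \<forall>s \<in> hcomp S z deg (\<alpha> \<otimes>\<^bsub>G\<^esub> \<beta>) - {z}.
               \<exists>u \<in> idems S smul - {z}. npo S smul u (smul (sinv S smul s) s)
                 \<and> smul s u \<in> setmult smul (hcomp S z deg \<alpha>) (hcomp S z deg \<beta>)"
proof (intro ballI)
  fix \<alpha> \<beta> s assume \<alpha>: "\<alpha> \<in> carrier G" and \<beta>: "\<beta> \<in> carrier G"
    and s: "s \<in> hcomp S z deg (\<alpha> \<otimes>\<^bsub>G\<^esub> \<beta>) - {z}"
  have sS: "s \<in> S" "s \<noteq> z" "deg s = \<alpha> \<otimes>\<^bsub>G\<^esub> \<beta>" using s hcD by auto
  have "s\<^sup>* \<cdot> s \<in> idems S smul - {z}" using ss_idem2 nz2 sS by auto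
  moreover have ib: "inv\<^bsub>G\<^esub> \<beta> \<in> carrier G" using \<beta> grp by (simp add: group.inv_closed)
  ultimately obtain v where v: "v \<in> idems_deg S smul z deg (inv\<^bsub>G\<^esub> \<beta>) - {z}" "npo S smul v (s\<^sup>* \<cdot> s)"
    using P by blast
  obtain w where w: "w \<in> S" "w \<noteq> z" "deg w = inv\<^bsub>G\<^esub> \<beta>" "v = w \<cdot> w\<^sup>*" using idems_deg_D v by blast
  have vI: "v \<in> idems S smul" using w ss_idem by auto
  have "s \<cdot> w \<in> hcomp S z deg \<alpha>"
  proof (rule hcI)
    show "s \<cdot> w \<in> S" using cl sS w by auto
    assume "s \<cdot> w \<noteq> z"
    hence "deg (s \<cdot> w) = \<alpha> \<otimes>\<^bsub>G\<^esub> \<beta> \<otimes>\<^bsub>G\<^esub> inv\<^bsub>G\<^esub> \<beta>" using degM sS w by auto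
    thus "deg (s \<cdot> w) = \<alpha>" using \<alpha> \<beta> grp
      by (simp add: group.inv_closed group.is_monoid group.r_inv monoid.m_assoc monoid.r_one)
  qed
  moreover have "w\<^sup>* \<in> hcomp S z deg \<beta>" using hcI deg_inv w \<beta> grp by (simp add: group.inv_inv)
  moreover have "s \<cdot> v = s \<cdot> w \<cdot> w\<^sup>*" using w sS as by simp
  ultimately have "s \<cdot> v \<in> setmult smul (hcomp S z deg \<alpha>) (hcomp S z deg \<beta>)"
    unfolding setmult_def by blast
  thus "\<exists>u \<in> idems S smul - {z}. npo S smul u (s\<^sup>* \<cdot> s)
                 \<and> s \<cdot> u \<in> setmult smul (hcomp S z deg \<alpha>) (hcomp S z deg \<beta>)"
    using v vI by auto
qed

lemma L24:
  assumes P: "\<forall>\<alpha> \<in> carrier G. \<forall>u \<in> idems S smul - {z}.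
             \<exists>v \<in> idems_deg S smul z deg \<alpha> - {z}. npo S smul v u"
  shows "\<forall>\<alpha> \<in> carrier G. \<forall>\<beta> \<in> carrier G.
             \<forall>s \<in> hcomp S z deg (\<alpha> \<otimes>\<^bsub>G\<^esub> \<beta>) - {z}.
               \<exists>u \<in> idems S smul - {z}. npo S smul u (smul s (sinv S smul s))
                 \<and> smul u s \<in> setmult smul (hcomp S z deg \<alpha>) (hcomp S z deg \<beta>)"
proof (intro ballI)
  fix \<alpha> \<beta> s assume \<alpha>: "\<alpha> \<in> carrier G" and \<beta>: "\<beta> \<in> carrier G"
    and s: "s \<in> hcomp S z deg (\<alpha> \<otimes>\<^bsub>G\<^esub> \<beta>) - {z}"
  have sS: "s \<in> S" "s \<noteq> z" "deg s = \<alpha> \<otimes>\<^bsub>G\<^esub> \<beta>" using s hcD by auto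
  have "s \<cdot> s\<^sup>* \<in> idems S smul - {z}" using ss_idem nz1 sS by auto
  then obtain v where v: "v \<in> idems_deg S smul z deg \<alpha> - {z}" "npo S smul v (s \<cdot> s\<^sup>*)"
    using P \<alpha> by blast
  obtain w where w: "w \<in> S" "w \<noteq> z" "deg w = \<alpha>" "v = w \<cdot> w\<^sup>*" using idems_deg_D v by blast
  have vI: "v \<in> idems S smul" using w ss_idem by auto
  have "w\<^sup>* \<cdot> s \<in> hcomp S z deg \<beta>"
  proof (rule hcI)
    show "w\<^sup>* \<cdot> s \<in> S" using cl sS w by auto
    assume "w\<^sup>* \<cdot> s \<noteq> z"
    hence "deg (w\<^sup>* \<cdot> s) = inv\<^bsub>G\<^esub> \<alpha> \<otimes>\<^bsub>G\<^esub> (\<alpha> \<otimes>\<^bsub>G\<^esub> \<beta>)" using degM sS w deg_inv by auto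
    thus "deg (w\<^sup>* \<cdot> s) = \<beta>" using \<alpha> \<beta> grp
      by (simp add: group.inv_closed group.is_monoid group.l_inv monoid.m_assoc[symmetric] monoid.l_one)
  qed
  moreover have "w \<in> hcomp S z deg \<alpha>" using hcI w by auto
  moreover have "v \<cdot> s = w \<cdot> (w\<^sup>* \<cdot> s)" using w sS as by simp
  ultimately have "v \<cdot> s \<in> setmult smul (hcomp S z deg \<alpha>) (hcomp S z deg \<beta>)"
    unfolding setmult_def by blast
  thus "\<exists>u \<in> idems S smul - {z}. npo S smul u (s \<cdot> s\<^sup>*)
                 \<and> u \<cdot> s \<in> setmult smul (hcomp S z deg \<alpha>) (hcomp S z deg \<beta>)"
    using v vI by auto
qed


lemma L31:
  assumes P: "\<forall>\<alpha> \<in> carrier G. \<forall>\<beta> \<in> carrier G.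
             \<forall>s \<in> hcomp S z deg (\<alpha> \<otimes>\<^bsub>G\<^esub> \<beta>) - {z}.
               \<exists>u \<in> idems S smul - {z}. npo S smul u (smul (sinv S smul s) s)
                 \<and> smul s u \<in> setmult smul (hcomp S z deg \<alpha>) (hcomp S z deg \<beta>)"
  shows "locally_strongly_graded G S smul z deg"
  unfolding locally_strongly_graded_def
proof (intro ballI)
  fix \<alpha> \<beta> s assume \<alpha>: "\<alpha> \<in> carrier G" and \<beta>: "\<beta> \<in> carrier G"
    and s: "s \<in> hcomp S z deg (\<alpha> \<otimes>\<^bsub>G\<^esub> \<beta>) - {z}"
  have sS: "s \<in> S" "s \<noteq> z" using s hcD by auto
  obtain u where u: "u \<in> idems S smul - {z}" "npo S smul u (s\<^sup>* \<cdot> s)"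
    "s \<cdot> u \<in> setmult smul (hcomp S z deg \<alpha>) (hcomp S z deg \<beta>)"
    using P \<alpha> \<beta> s by blast
  obtain e where e: "e \<in> idems S smul" "u = s\<^sup>* \<cdot> s \<cdot> e" using u unfolding npo_def by auto
  have uS: "u \<in> S" using u idemI by auto
  have eS: "e \<in> S" using e idemI by auto
  have ssI: "s\<^sup>* \<cdot> s \<in> S" "s\<^sup>* \<cdot> s \<cdot> (s\<^sup>* \<cdot> s) = s\<^sup>* \<cdot> s" using ss_idem2 sS idemI by auto
  have "s\<^sup>* \<cdot> (s \<cdot> u) = s\<^sup>* \<cdot> s \<cdot> u" using sS uS as by simp
  also have "\<dots> = u" using e ee_assoc[OF ssI eS] ssI sS eS as by simp
  finally have k: "s\<^sup>* \<cdot> (s \<cdot> u) = u" .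
  have "s \<cdot> u \<noteq> z" using k u zr sS by auto
  moreover have "npo S smul (s \<cdot> u) s" unfolding npo_def using u idemI by auto
  ultimately show "\<exists>t \<in> setmult smul (hcomp S z deg \<alpha>) (hcomp S z deg \<beta>) - {z}. npo S smul t s"
    using u by blast
qed

lemma L41:
  assumes P: "\<forall>\<alpha> \<in> carrier G. \<forall>\<beta> \<in> carrier G.
             \<forall>s \<in> hcomp S z deg (\<alpha> \<otimes>\<^bsub>G\<^esub> \<beta>) - {z}.
               \<exists>u \<in> idems S smul - {z}. npo S smul u (smul s (sinv S smul s))
                 \<and> smul u s \<in> setmult smul (hcomp S z deg \<alpha>) (hcomp S z deg \<beta>)"
  shows "locally_strongly_graded G S smul z deg"
  unfolding locally_strongly_graded_def
proof (intro ballI)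
  fix \<alpha> \<beta> s assume \<alpha>: "\<alpha> \<in> carrier G" and \<beta>: "\<beta> \<in> carrier G"
    and s: "s \<in> hcomp S z deg (\<alpha> \<otimes>\<^bsub>G\<^esub> \<beta>) - {z}"
  have sS: "s \<in> S" "s \<noteq> z" using s hcD by auto
  obtain u where u: "u \<in> idems S smul - {z}" "npo S smul u (s \<cdot> s\<^sup>*)"
    "u \<cdot> s \<in> setmult smul (hcomp S z deg \<alpha>) (hcomp S z deg \<beta>)"
    using P \<alpha> \<beta> s by blast
  obtain e where e: "e \<in> idems S smul" "u = s \<cdot> s\<^sup>* \<cdot> e" using u unfolding npo_def by auto
  have uS: "u \<in> S" "u \<cdot> u = u" using u idemI by auto
  have eS: "e \<in> S" "e \<cdot> e = e" using e idemI by auto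
  have ssI: "s \<cdot> s\<^sup>* \<in> S" "s \<cdot> s\<^sup>* \<cdot> (s \<cdot> s\<^sup>*) = s \<cdot> s\<^sup>*" using ss_idem sS idemI by auto
  have "u \<cdot> (s \<cdot> s\<^sup>*) = s \<cdot> s\<^sup>* \<cdot> (e \<cdot> (s \<cdot> s\<^sup>*))" using e ssI eS as by simp
  also have "\<dots> = s \<cdot> s\<^sup>* \<cdot> (s \<cdot> s\<^sup>* \<cdot> e)" using idem_comm[OF eS ssI] by simp
  also have "\<dots> = u" using e ee_assoc[OF ssI eS(1)] by simp
  finally have k: "u \<cdot> (s \<cdot> s\<^sup>*) = u" .
  have "s \<cdot> (s\<^sup>* \<cdot> u) = s \<cdot> s\<^sup>* \<cdot> u" using sS uS as by simp
  also have "\<dots> = u" using e ee_assoc[OF ssI eS(1)] by simp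
  finally have k2: "s \<cdot> (s\<^sup>* \<cdot> u) = u" .
  have "u \<cdot> s \<cdot> s\<^sup>* = u" using k sS uS as by simp
  hence "u \<cdot> s \<noteq> z" using u zl sS by auto
  moreover have "npo S smul (u \<cdot> s) s" unfolding npo_def
  proof
    define x where "x = s\<^sup>* \<cdot> (u \<cdot> s)"
    have xS: "x \<in> S" using x_def cl sS uS by auto
    have "x \<cdot> x = s\<^sup>* \<cdot> (u \<cdot> (s \<cdot> s\<^sup>*) \<cdot> (u \<cdot> s))" unfolding x_def using sS uS as cl by simp
    also have "\<dots> = x" unfolding x_def using k uS sS ee_assoc[OF uS, of s] by simp
    finally show "x \<in> idems S smul" using xS idemI by auto
    have "s \<cdot> x = s \<cdot> (s\<^sup>* \<cdot> u) \<cdot> s" unfolding x_def using sS uS as cl by simp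
    thus "u \<cdot> s = s \<cdot> x" using k2 by simp
  qed
  ultimately show "\<exists>t \<in> setmult smul (hcomp S z deg \<alpha>) (hcomp S z deg \<beta>) - {z}. npo S smul t s"
    using u by blast
qed

end

theorem proposition2p15:
  fixes G :: "('g, 'b) monoid_scheme"
    and S :: "'a set" and smul :: "'a \<Rightarrow> 'a \<Rightarrow> 'a" and z :: 'a and deg :: "'a \<Rightarrow> 'g"
  assumes "group G"
    and "inverse_semigroup_zero S smul z"
    and "graded G S smul z deg"
  shows
   "(locally_strongly_graded G S smul z deg
      \<longleftrightarrow> (\<forall>\<alpha> \<in> carrier G. \<forall>u \<in> idems S smul - {z}.
             \<exists>v \<in> idems_deg S smul z deg \<alpha> - {z}. npo S smul v u))
    \<and> (locally_strongly_graded G S smul z deg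
      \<longleftrightarrow> (\<forall>\<alpha> \<in> carrier G. \<forall>\<beta> \<in> carrier G.
             \<forall>s \<in> hcomp S z deg (\<alpha> \<otimes>\<^bsub>G\<^esub> \<beta>) - {z}.
               \<exists>u \<in> idems S smul - {z}. npo S smul u (smul (sinv S smul s) s)
                 \<and> smul s u \<in> setmult smul (hcomp S z deg \<alpha>) (hcomp S z deg \<beta>)))
    \<and> (locally_strongly_graded G S smul z deg
      \<longleftrightarrow> (\<forall>\<alpha> \<in> carrier G. \<forall>\<beta> \<in> carrier G.
             \<forall>s \<in> hcomp S z deg (\<alpha> \<otimes>\<^bsub>G\<^esub> \<beta>) - {z}.
               \<exists>u \<in> idems S smul - {z}. npo S smul u (smul s (sinv S smul s))
                 \<and> smul u s \<in> setmult smul (hcomp S z deg \<alpha>) (hcomp S z deg \<beta>)))"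
proof -
  interpret gisz G S smul z deg
    using assms unfolding gisz_def gisz_axioms_def isz_def by auto
  show ?thesis using L12 L23 L24 L31 L41 by blast
qed

end
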